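(* Let $u^2:S\times B\to\mathbb{R}$ and let $y:S\to\Delta(B)$ be a non-constant map such that $U^2(\mu_0,y)\ge v^2$. Then every neighborhood of $u^2$ in $\mathbb{R}^{S\times B}$ contains a function $\tilde u^2:S\times B\to\mathbb{R}$ such that $\tilde U^2(\mu_0,y)>\tilde v^2$, where $\tilde U^2,\tilde v^2$ are computed with $\tilde u^2$ in place of $u^2$.
   Context: $S$ and $B$ are finite sets, $m\in\Delta(S)$ has full support (the invariant measure of an irreducible aperiodic Markov chain on $S$). $\mu_0$ is the distribution on $S\times S$ with $\mu_0(s,s)=m(s)$ and $\mu_0(s,t)=0$ for $s\ne t$. For a receiver payoff $u^2:S\times B\to\mathbb{R}$ (extended linearly to mixed actions) and $y:S\to\Delta(B)$, $U^2(\mu_0,y)=\sum_{s\in S}m(s)u^2(s,y(\cdot\mid s))$ and $v^2=\max_{b\in B}\sum_{s\in S}m(s)u^2(s,b)$. A map $y$ is constant if $y(\cdot\mid s)$ does not depend on $s$. *)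

theory Defs
  imports "HOL-Analysis.Analysis"
begin

definition is_dist :: "('a::finite \<Rightarrow> real) \<Rightarrow> bool" where
  "is_dist p \<longleftrightarrow> (\<forall>a. 0 \<le> p a) \<and> (\<Sum>a\<in>UNIV. p a) = 1"

definition mixed_payoff :: "('s \<Rightarrow> 'b::finite \<Rightarrow> real) \<Rightarrow> 's \<Rightarrow> ('b \<Rightarrow> real) \<Rightarrow> real" where
  "mixed_payoff u s q = (\<Sum>b\<in>UNIV. q b * u s b)"

(* U^2(mu_0, y) = sum_s m(s) u^2(s, y(.|s)) *)
definition U2 :: "('s::finite \<Rightarrow> real) \<Rightarrow> ('s \<Rightarrow> 'b::finite \<Rightarrow> real) \<Rightarrow> ('s \<Rightarrow> 'b \<Rightarrow> real) \<Rightarrow> real" where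
  "U2 m u y = (\<Sum>s\<in>UNIV. m s * mixed_payoff u s (y s))"

definition v2 :: "('s::finite \<Rightarrow> real) \<Rightarrow> ('s \<Rightarrow> 'b::finite \<Rightarrow> real) \<Rightarrow> real" where
  "v2 m u = (MAX b\<in>UNIV. \<Sum>s\<in>UNIV. m s * u s b)"

definition constant_map :: "('s \<Rightarrow> 'b \<Rightarrow> real) \<Rightarrow> bool" where
  "constant_map y \<longleftrightarrow> (\<forall>s t. y s = y t)"

end

theory Submission
  imports Defs
begin

theorem lemma11:
  fixes m :: "'s::finite \<Rightarrow> real"
    and u :: "'s \<Rightarrow> 'b::finite \<Rightarrow> real"
    and y :: "'s \<Rightarrow> 'b \<Rightarrow> real"
  assumes m_dist: "is_dist m"
    and m_full: "\<forall>s. m s > 0"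
    and y_dist: "\<forall>s. is_dist (y s)"
    and y_nonconst: "\<not> constant_map y"
    and hyp: "U2 m u y \<ge> v2 m u"
  shows "\<forall>N. open N \<and> u \<in> N \<longrightarrow> (\<exists>u'\<in>N. U2 m u' y > v2 m u')"
proof (intro allI impI)
  fix N :: "('s \<Rightarrow> 'b \<Rightarrow> real) set"
  assume N: "open N \<and> u \<in> N"
  define yb where "yb b = (\<Sum>s\<in>UNIV. m s * y s b)" for b
  define d where "d s b = y s b - yb b" for s b
  have msum: "(\<Sum>s\<in>UNIV. m s) = 1" using m_dist by (simp add: is_dist_def)
  have dz: "(\<Sum>s\<in>UNIV. m s * d s b) = 0" for b
    by (simp add: d_def right_diff_distrib sum_subtractf yb_def sum_distrib_right[symmetric] msum)
  define K where "K = (\<Sum>s\<in>UNIV. m s * (\<Sum>b\<in>UNIV. (d s b)^2))"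
  have K_eq: "U2 m d y = K"
  proof -
    have "U2 m d y = (\<Sum>s\<in>UNIV. m s * (\<Sum>b\<in>UNIV. (d s b + yb b) * d s b))"
      by (simp add: U2_def mixed_payoff_def d_def)
    also have "\<dots> = K + (\<Sum>s\<in>UNIV. \<Sum>b\<in>UNIV. m s * (yb b * d s b))"
      by (simp add: K_def power2_eq_square distrib_right sum.distrib distrib_left sum_distrib_left[symmetric])
    also have "(\<Sum>s\<in>UNIV. \<Sum>b\<in>UNIV. m s * (yb b * d s b)) = (\<Sum>b\<in>UNIV. yb b * (\<Sum>s\<in>UNIV. m s * d s b))"
      by (subst sum.swap) (simp add: sum_distrib_left mult.assoc mult.left_commute)
    finally show ?thesis using dz by simp
  qed
  obtain s t where st: "y s \<noteq> y t" using y_nonconst by (auto simp: constant_map_def)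
  have "\<exists>r. d r \<noteq> (\<lambda>_. 0)"
  proof (rule ccontr)
    assume "\<not> ?thesis"
    hence "\<And>r b. y r b = yb b" by (metis d_def eq_iff_diff_eq_0)
    hence "y s = y t" by auto
    with st show False by simp
  qed
  then obtain r c where rc: "d r c \<noteq> 0" by (meson ext)
  have Kpos: "K > 0" unfolding K_def
  proof (rule sum_pos2[where i=r])
    show "0 < m r * (\<Sum>b\<in>UNIV. (d r b)\<^sup>2)"
      using m_full rc by (intro mult_pos_pos) (auto intro!: sum_pos2[where i=c])
  qed (use m_full less_imp_le in \<open>auto intro!: mult_nonneg_nonneg sum_nonneg\<close>)
  define f where "f e = (\<lambda>s b. u s b + e * d s b)" for e :: real
  have cont: "continuous_on UNIV f"
    unfolding f_def
    by (intro continuous_on_coordinatewise_then_product continuous_intros)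
  have "open (f -` N)" using open_vimage[OF _ cont] N by simp
  moreover have "0 \<in> f -` N" using N by (simp add: f_def)
  ultimately obtain e where e: "e > 0" "ball 0 e \<subseteq> f -` N"
    using open_contains_ball by blast
  have "e/2 \<in> ball 0 e" using e(1) by (simp add: dist_real_def)
  hence fN: "f (e/2) \<in> N" using e(2) by blast
  have U: "U2 m (f (e/2)) y = U2 m u y + e/2 * K"
    unfolding K_eq[symmetric]
    by (simp add: U2_def mixed_payoff_def f_def distrib_left sum.distrib sum_distrib_left mult_ac)
  have V: "v2 m (f (e/2)) = v2 m u"
  proof -
    have "(\<Sum>s\<in>UNIV. m s * f (e/2) s b) = (\<Sum>s\<in>UNIV. m s * u s b)" for b
    proof -
      have "(\<Sum>s\<in>UNIV. m s * f (e/2) s b) = (\<Sum>s\<in>UNIV. m s * u s b) + e/2 * (\<Sum>s\<in>UNIV. m s * d s b)"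
        by (simp add: f_def distrib_left sum.distrib sum_distrib_left mult_ac)
      thus ?thesis using dz by simp
    qed
    thus ?thesis by (simp add: v2_def)
  qed
  show "\<exists>u'\<in>N. U2 m u' y > v2 m u'"
  proof (intro bexI[of _ "f (e/2)"] fN)
    have "e * K / 2 > 0" using Kpos e(1) by simp
    thus "U2 m (f (e/2)) y > v2 m (f (e/2))" using U V hyp by simp
  qed
qed

end
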